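(* There is a function $f(n)\in\mathcal O(n^3)$ such that in every anonymous hedonic game with $n$ agents in which all agents have strict and naturally single-peaked preferences, every sequence of IS deviations starting from any initial partition has length at most $f(n)$; in particular it terminates in an individually stable partition.
   Context: In an anonymous hedonic game on agents $N=[n]$, each agent $i$ has a weak order $\succsim_i^S$ over sizes $\{1,\dots,n\}$, and compares coalitions containing $i$ by their sizes. Strict means the orders are linear. Naturally single-peaked means: for every agent $i$ and integers $x,y,z\in[n]$ with $x>y>z$ or $z>y>x$, $x\succ_i^S y$ implies $y\succsim_i^S z$. An IS deviation of agent $i$ from partition $\pi$ to $\pi'$ is a move of $i$ alone from $\pi(i)$ into another coalition of $\pi$ or into a new singleton such that $\pi'(i)\succ_i\pi(i)$ and $\pi'(j)\succsim_j\pi(j)$ for every $j\in\pi'(i)\setminus\{i\}$. A partition is individually stable (IS) if no IS deviation is possible from it. *)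

theory Defs
  imports Main "HOL-Library.Disjoint_Sets" "HOL-Library.Landau_Symbols"
begin

text \<open>Agents are 0,...,n-1. A preference profile R assigns to each agent i a relation
  R i on sizes {1..n}; (x, y) \<in> R i means size x is weakly preferred to size y.\<close>

definition weak_size_order :: "nat \<Rightarrow> (nat \<times> nat) set \<Rightarrow> bool" where
  "weak_size_order n r \<longleftrightarrow> r \<subseteq> {1..n} \<times> {1..n} \<and> preorder_on {1..n} r \<and> total_on {1..n} r"

definition wpref :: "(nat \<times> nat) set \<Rightarrow> nat \<Rightarrow> nat \<Rightarrow> bool" where
  "wpref r x y \<longleftrightarrow> (x, y) \<in> r"

definition spref :: "(nat \<times> nat) set \<Rightarrow> nat \<Rightarrow> nat \<Rightarrow> bool" where
  "spref r x y \<longleftrightarrow> (x, y) \<in> r \<and> (y, x) \<notin> r"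

definition strict_anon_game :: "nat \<Rightarrow> (nat \<Rightarrow> (nat \<times> nat) set) \<Rightarrow> bool" where
  "strict_anon_game n R \<longleftrightarrow>
     (\<forall>i<n. weak_size_order n (R i) \<and> antisym (R i))"

definition naturally_single_peaked :: "nat \<Rightarrow> (nat \<Rightarrow> (nat \<times> nat) set) \<Rightarrow> bool" where
  "naturally_single_peaked n R \<longleftrightarrow>
     (\<forall>i<n. \<forall>x\<in>{1..n}. \<forall>y\<in>{1..n}. \<forall>z\<in>{1..n}.
        (x > y \<and> y > z \<or> z > y \<and> y > x) \<longrightarrow> spref (R i) x y \<longrightarrow> wpref (R i) y z)"

definition coal :: "nat set set \<Rightarrow> nat \<Rightarrow> nat set" where
  "coal P i = (THE B. B \<in> P \<and> i \<in> B)"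

text \<open>IS deviation of agent i from P into coalition C (C \<in> P different from i's coalition,
  or C = {} meaning a new singleton), resulting in P'.\<close>
definition IS_deviation :: "nat \<Rightarrow> (nat \<Rightarrow> (nat \<times> nat) set) \<Rightarrow> nat set set \<Rightarrow> nat set set \<Rightarrow> bool" where
  "IS_deviation n R P P' \<longleftrightarrow>
     (\<exists>i<n. \<exists>C \<in> P \<union> {{}}. i \<notin> C \<and>
        P' = ((P - {coal P i, C}) \<union> {coal P i - {i}, insert i C}) - {{}} \<and>
        spref (R i) (card (insert i C)) (card (coal P i)) \<and>
        (\<forall>j\<in>C. wpref (R j) (card (insert i C)) (card C)))"

definition IS_stable :: "nat \<Rightarrow> (nat \<Rightarrow> (nat \<times> nat) set) \<Rightarrow> nat set set \<Rightarrow> bool" where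
  "IS_stable n R P \<longleftrightarrow> \<not> (\<exists>P'. IS_deviation n R P P')"

definition IS_sequence :: "nat \<Rightarrow> (nat \<Rightarrow> (nat \<times> nat) set) \<Rightarrow> (nat \<Rightarrow> nat set set) \<Rightarrow> nat \<Rightarrow> bool" where
  "IS_sequence n R seq k \<longleftrightarrow>
     partition_on {0..<n} (seq 0) \<and> (\<forall>t<k. IS_deviation n R (seq t) (seq (Suc t)))"

end

theory Submission
  imports Defs
begin

locale spo =
  fixes n :: nat and r :: "(nat \<times> nat) set"
  assumes sub: "r \<subseteq> {1..n} \<times> {1..n}"
    and rfl: "\<And>x. x \<in> {1..n} \<Longrightarrow> (x,x) \<in> r"
    and trn: "\<And>x y z. (x,y) \<in> r \<Longrightarrow> (y,z) \<in> r \<Longrightarrow> (x,z) \<in> r"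
    and tot: "\<And>x y. x \<in> {1..n} \<Longrightarrow> y \<in> {1..n} \<Longrightarrow> x \<noteq> y \<Longrightarrow> (x,y) \<in> r \<or> (y,x) \<in> r"
    and asy: "\<And>x y. (x,y) \<in> r \<Longrightarrow> (y,x) \<in> r \<Longrightarrow> x = y"
    and sp: "\<And>x y z. x \<in> {1..n} \<Longrightarrow> y \<in> {1..n} \<Longrightarrow> z \<in> {1..n} \<Longrightarrow>
              (x > y \<and> y > z \<or> z > y \<and> y > x) \<Longrightarrow> (x,y) \<in> r \<Longrightarrow> (y,x) \<notin> r \<Longrightarrow> (y,z) \<in> r"
    and npos: "1 \<le> n"
begin

lemma max_ex: "finite S \<Longrightarrow> S \<noteq> {} \<Longrightarrow> S \<subseteq> {1..n} \<Longrightarrow> \<exists>x\<in>S. \<forall>y\<in>S. (x,y) \<in> r"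
proof (induction S rule: finite_ne_induct)
  case (singleton x) then show ?case using rfl by auto
next
  case (insert a S)
  then obtain x where x: "x \<in> S" "\<forall>y\<in>S. (x,y) \<in> r" by auto
  show ?case
  proof (cases "(x,a) \<in> r")
    case True then show ?thesis using x by auto
  next
    case False
    have an: "a \<in> {1..n}" "x \<in> {1..n}" using insert.prems x by auto
    have "x \<noteq> a" using False rfl[OF an(1)] by auto
    then have "(a,x) \<in> r" using tot[OF an(2) an(1)] False by auto
    then show ?thesis using x trn rfl insert.prems by blast
  qed
qed

definition pk :: nat where "pk = (SOME p. p \<in> {1..n} \<and> (\<forall>y\<in>{1..n}. (p,y) \<in> r))"

lemma pk: "pk \<in> {1..n}" "\<And>y. y \<in> {1..n} \<Longrightarrow> (pk,y) \<in> r"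
proof -
  have "\<exists>p. p \<in> {1..n} \<and> (\<forall>y\<in>{1..n}. (p,y) \<in> r)" using max_ex[of "{1..n}"] npos by auto
  then have "pk \<in> {1..n} \<and> (\<forall>y\<in>{1..n}. (pk,y) \<in> r)" unfolding pk_def by (rule someI_ex)
  then show "pk \<in> {1..n}" "\<And>y. y \<in> {1..n} \<Longrightarrow> (pk,y) \<in> r" by auto
qed

lemma strict_of: "(x,y) \<in> r \<Longrightarrow> x \<noteq> y \<Longrightarrow> (y,x) \<notin> r" using asy by blast

lemma sp_under: assumes "1 \<le> z" "z < y" "y \<le> pk" shows "(y,z) \<in> r" "(z,y) \<notin> r"
proof -
  have zn: "z \<in> {1..n}" "y \<in> {1..n}" using assms pk(1) by auto
  show "(y,z) \<in> r"
  proof (cases "y = pk")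
    case True then show ?thesis using pk(2)[OF zn(1)] by simp
  next
    case False
    have a: "(pk,y) \<in> r" using pk(2)[OF zn(2)] .
    have b: "(y,pk) \<notin> r" using strict_of[OF a] False by auto
    have o: "pk > y \<and> y > z \<or> z > y \<and> y > pk" using assms False by auto
    show ?thesis by (rule sp[OF pk(1) zn(2) zn(1) o a b])
  qed
  then show "(z,y) \<notin> r" using strict_of[of y z] assms by auto
qed

lemma sp_over: assumes "pk \<le> y" "y < z" "z \<le> n" shows "(y,z) \<in> r" "(z,y) \<notin> r"
proof -
  have zn: "z \<in> {1..n}" "y \<in> {1..n}" using assms pk(1) by auto
  show "(y,z) \<in> r"
  proof (cases "y = pk")
    case True then show ?thesis using pk(2)[OF zn(1)] by simp
  next
    case False
    have a: "(pk,y) \<in> r" using pk(2)[OF zn(2)] .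
    have b: "(y,pk) \<notin> r" using strict_of[OF a] False by auto
    have o: "pk > y \<and> y > z \<or> z > y \<and> y > pk" using assms False by auto
    show ?thesis by (rule sp[OF pk(1) zn(2) zn(1) o a b])
  qed
  then show "(z,y) \<notin> r" using strict_of[of y z] assms by auto
qed

definition Ls :: "nat \<Rightarrow> nat set" where "Ls s = {t. t \<le> pk \<and> (s,t) \<in> r \<and> (t,s) \<notin> r}"
definition Ws :: "nat \<Rightarrow> nat set" where "Ws s = {t. t \<le> pk \<and> (s,t) \<in> r}"
definition h :: "nat \<Rightarrow> nat" where "h s = card (Ls s) + card (Ws s)"

lemma Ls_sub: "Ls s \<subseteq> {1..pk}"
proof
  fix t assume "t \<in> Ls s"
  then have "(s,t) \<in> r" "t \<le> pk" unfolding Ls_def by auto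
  then have "(s,t) \<in> {1..n} \<times> {1..n}" "t \<le> pk" using sub by blast+
  then show "t \<in> {1..pk}" by auto
qed
lemma Ws_sub: "Ws s \<subseteq> {1..pk}"
proof
  fix t assume "t \<in> Ws s"
  then have "(s,t) \<in> r" "t \<le> pk" unfolding Ws_def by auto
  then have "(s,t) \<in> {1..n} \<times> {1..n}" "t \<le> pk" using sub by blast+
  then show "t \<in> {1..pk}" by auto
qed

lemma h_bound: "h s \<le> 2 * n"
proof -
  have "card (Ls s) \<le> pk" "card (Ws s) \<le> pk"
    using card_mono[OF _ Ls_sub, of s] card_mono[OF _ Ws_sub, of s] by auto
  then show ?thesis unfolding h_def using pk(1) by auto
qed

lemma h_under: assumes "1 \<le> s" "s \<le> pk" shows "h s = 2 * s - 1"
proof -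
  have "Ls s = {1..<s}"
  proof
    show "Ls s \<subseteq> {1..<s}"
    proof
      fix t assume t: "t \<in> Ls s"
      then have "t \<in> {1..pk}" using Ls_sub by blast
      with t have t1: "1 \<le> t" "t \<le> pk" "(t,s) \<notin> r" unfolding Ls_def by auto
      have "\<not> s \<le> t"
      proof
        assume "s \<le> t"
        then show False using t1 sp_under[of s t] rfl[of s] assms pk(1)
          by (cases "s = t") auto
      qed
      then show "t \<in> {1..<s}" using t1 by auto
    qed
    show "{1..<s} \<subseteq> Ls s"
    proof
      fix t assume "t \<in> {1..<s}"
      then have "1 \<le> t" "t < s" by auto
      then show "t \<in> Ls s" unfolding Ls_def using sp_under[of t s] assms by auto
    qed
  qed
  moreover have "Ws s = {1..s}"
  proof
    show "Ws s \<subseteq> {1..s}"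
    proof
      fix t assume t: "t \<in> Ws s"
      then have "t \<in> {1..pk}" using Ws_sub by blast
      with t have t1: "1 \<le> t" "t \<le> pk" "(s,t) \<in> r" unfolding Ws_def by auto
      have "\<not> s < t" using t1 sp_under[of s t] assms by auto
      then show "t \<in> {1..s}" using t1 by auto
    qed
    show "{1..s} \<subseteq> Ws s"
    proof
      fix t assume "t \<in> {1..s}"
      then have t: "1 \<le> t" "t \<le> s" by auto
      have "(s,t) \<in> r"
      proof (cases "t = s")
        case True then show ?thesis using rfl[of s] assms pk(1) by auto
      next
        case False then show ?thesis using sp_under[of t s] assms t by auto
      qed
      then show "t \<in> Ws s" unfolding Ws_def using t assms by auto
    qed
  qed
  ultimately show ?thesis unfolding h_def using assms by auto
qed

lemma h_mono: assumes "(s,s') \<in> r" "(s',s) \<notin> r"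
  shows "h s' + (if s \<le> pk \<or> s' \<le> pk then 1 else 0) \<le> h s"
proof -
  have LL: "Ls s' \<subseteq> Ls s"
  proof
    fix t assume "t \<in> Ls s'"
    then have t: "t \<le> pk" "(s',t) \<in> r" "(t,s') \<notin> r" unfolding Ls_def by auto
    have "(s,t) \<in> r" using trn[OF assms(1) t(2)] .
    moreover have "(t,s) \<notin> r"
    proof
      assume "(t,s) \<in> r"
      then have "(t,s') \<in> r" using trn[OF _ assms(1)] by blast
      then show False using t(3) by blast
    qed
    ultimately show "t \<in> Ls s" unfolding Ls_def using t(1) by blast
  qed
  have WW: "Ws s' \<subseteq> Ws s"
  proof
    fix t assume "t \<in> Ws s'"
    then have t: "t \<le> pk" "(s',t) \<in> r" unfolding Ws_def by auto
    have "(s,t) \<in> r" using trn[OF assms(1) t(2)] .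
    then show "t \<in> Ws s" unfolding Ws_def using t(1) by blast
  qed
  have fin: "finite (Ls s)" "finite (Ws s)"
    using finite_subset[OF Ls_sub[of s]] finite_subset[OF Ws_sub[of s]] by auto
  have "(s', s) \<in> {1..n} \<times> {1..n}" using assms(1) sub by blast
  then have s1: "s \<in> {1..n}" "s' \<in> {1..n}" by auto
  show ?thesis
  proof (cases "s' \<le> pk")
    case True
    have "s' \<in> Ls s" using True assms unfolding Ls_def by blast
    moreover have "s' \<notin> Ls s'" unfolding Ls_def by blast
    ultimately
    have "Ls s' \<subset> Ls s" using LL by blast
    then have "card (Ls s') < card (Ls s)" using psubset_card_mono[OF fin(1)] by blast
    moreover have "card (Ws s') \<le> card (Ws s)" using WW fin card_mono by blast
    ultimately show ?thesis unfolding h_def using True by auto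
  next
    case False
    note F = False
    show ?thesis
    proof (cases "s \<le> pk")
      case True
      have "s \<in> Ws s" using True rfl[OF s1(1)] unfolding Ws_def by blast
      moreover have "s \<notin> Ws s'" using assms(2) unfolding Ws_def by blast
      ultimately
      have "Ws s' \<subset> Ws s" using WW by blast
      then have "card (Ws s') < card (Ws s)" using psubset_card_mono[OF fin(2)] by blast
      moreover have "card (Ls s') \<le> card (Ls s)" using LL fin card_mono by blast
      ultimately show ?thesis unfolding h_def using True by auto
    next
      case False
      have "card (Ws s') \<le> card (Ws s)" "card (Ls s') \<le> card (Ls s)"
        using LL WW fin card_mono by blast+
      then show ?thesis unfolding h_def using False F by auto
    qed
  qed
qed

definition K :: int where "K = int n + 1"

definition ov :: "nat \<Rightarrow> int" where "ov s = (if s > pk then int s - int pk else 0)"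

definition pot :: "nat \<Rightarrow> int" where
  "pot s = K * int (h s) - K * int s - ov s"

lemma K1: "K \<ge> 1" unfolding K_def by simp

lemma ov_nonneg: "ov s \<ge> 0" unfolding ov_def by simp
lemma ov_le: "s \<le> n \<Longrightarrow> ov s \<le> int n - 1" unfolding ov_def using pk(1) by auto
lemma ov_under: "s \<le> pk \<Longrightarrow> ov s = 0" unfolding ov_def by simp
lemma ov_over: "pk \<le> s \<Longrightarrow> ov s = int s - int pk" unfolding ov_def by simp

lemma Kmono: "x \<le> y \<Longrightarrow> K * int x \<le> K * int y"
  using K1 by (simp add: mult_left_mono)

lemma pot_join: assumes "1 \<le> c" "c + 1 \<le> n" "(c+1, c) \<in> r"
  shows "pot (c+1) = pot c + K"
proof -
  have cp: "c + 1 \<le> pk"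
  proof (rule ccontr)
    assume "\<not> c + 1 \<le> pk"
    then have "(c, c+1) \<in> r" using sp_over(1)[of c "c+1"] assms by auto
    then show False using asy assms(3) by force
  qed
  have h1: "h (c+1) = 2 * (c+1) - 1" using h_under[of "c+1"] cp by auto
  have h2: "h c = 2 * c - 1" using h_under[of c] cp assms by auto
  have "int (h (c+1)) = int (h c) + 2" using h1 h2 assms by auto
  moreover have "ov (c+1) = 0" "ov c = 0" using ov_under cp by auto
  ultimately show ?thesis unfolding pot_def by (simp add: algebra_simps)
qed

lemma pot_leave: assumes "2 \<le> a" "a \<le> n"
  shows "pot (a - 1) \<ge> pot a - K"
proof (cases "a \<le> pk")
  case True
  have h1: "h a = 2 * a - 1" using h_under[of a] True assms by auto
  have h2: "h (a - 1) = 2 * (a - 1) - 1" using h_under[of "a - 1"] True assms by auto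
  have "int (h a) = int (h (a - 1)) + 2" using h1 h2 assms by auto
  moreover have "int (a - 1) = int a - 1" using assms by auto
  moreover have "ov (a - 1) = 0" "ov a = 0" using ov_under True by auto
  ultimately show ?thesis unfolding pot_def by (simp add: algebra_simps)
next
  case False
  then have "(a - 1, a) \<in> r" "(a, a - 1) \<notin> r" using sp_over[of "a - 1" a] assms by auto
  then have "h a \<le> h (a - 1)" using h_mono[of "a - 1" a] by auto
  then have m: "K * int (h a) \<le> K * int (h (a - 1))" by (rule Kmono)
  have e1: "int (a - 1) = int a - 1" using assms by auto
  have o1: "ov a = int a - int pk" using ov_over False by auto
  have o2: "ov (a - 1) = int a - 1 - int pk" using ov_over[of "a - 1"] False e1 by auto
  have "K * int (a - 1) = K * int a - K" using e1 by (simp add: algebra_simps)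
  then show ?thesis unfolding pot_def using m o1 o2 K1 by linarith
qed

lemma pot_move: assumes "(s', s) \<in> r" "(s, s') \<notin> r"
  shows "pot s' + K * int s' \<ge> pot s + K * int s + 1"
proof -
  have "(s', s) \<in> {1..n} \<times> {1..n}" using assms(1) sub by blast
  then have s1: "s \<in> {1..n}" "s' \<in> {1..n}" by auto
  have e: "pot s' + K * int s' = K * int (h s') - ov s'" "pot s + K * int s = K * int (h s) - ov s"
    unfolding pot_def by simp_all
  show ?thesis
  proof (cases "s \<le> pk \<or> s' \<le> pk")
    case True
    then have "h s + 1 \<le> h s'" using h_mono[OF assms] by auto
    then have "K * int (h s + 1) \<le> K * int (h s')" by (rule Kmono)
    then have m: "K * int (h s) + K \<le> K * int (h s')" by (simp add: algebra_simps)
    have a1: "ov s' \<le> int n - 1" using s1 ov_le by auto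
    have a2: "ov s \<ge> 0" by (rule ov_nonneg)
    show ?thesis using e m a1 a2 K_def by linarith
  next
    case False
    have ne: "s \<noteq> s'"
    proof
      assume "s = s'" then show False using rfl[OF s1(1)] assms(2) by simp
    qed
    have "\<not> s < s'"
    proof
      assume "s < s'"
      moreover have "pk \<le> s" "s' \<le> n" using False s1 by auto
      ultimately have "(s', s) \<notin> r" using sp_over(2)[of s s'] by blast
      then show False using assms(1) by blast
    qed
    then have lt: "s' < s" using ne by linarith
    have "h s \<le> h s'" using h_mono[OF assms] by auto
    then have m: "K * int (h s) \<le> K * int (h s')" by (rule Kmono)
    have "ov s' = int s' - int pk" "ov s = int s - int pk" using ov_over False by auto
    then show ?thesis using e m lt by linarith
  qed
qed

lemma pot_bounds: assumes "1 \<le> s" "s \<le> n" shows "pot s \<le> 2 * int n * K" "- K * int n - int n \<le> pot s"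
proof -
  have "h s \<le> 2 * n" by (rule h_bound)
  then have a: "K * int (h s) \<le> K * int (2 * n)" by (rule Kmono)
  have b: "K * int s \<le> K * int n" using assms by (intro Kmono)
  have c: "K * 0 \<le> K * int (h s)" using K1 by (intro mult_left_mono) auto
  have "K * int (2 * n) = 2 * int n * K" by simp
  then show "pot s \<le> 2 * int n * K" unfolding pot_def using a c ov_nonneg[of s] K1 by (smt (verit) mult_nonneg_nonneg of_nat_0_le_iff)
  have "ov s \<le> int n" using ov_le assms by fastforce
  then show "- K * int n - int n \<le> pot s" unfolding pot_def using b c by simp
qed

end

lemma spo_inst:
  assumes g: "strict_anon_game n R" and nsp: "naturally_single_peaked n R" and j: "j < n"
  shows "spo n (R j)"
proof -
  have w: "weak_size_order n (R j)" and an: "antisym (R j)" using g j unfolding strict_anon_game_def by auto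
  have sub: "R j \<subseteq> {1..n} \<times> {1..n}" and po: "preorder_on {1..n} (R j)" and to: "total_on {1..n} (R j)"
    using w unfolding weak_size_order_def by auto
  have rf: "refl_on {1..n} (R j)" and tr: "trans (R j)" using po unfolding preorder_on_def by auto
  show ?thesis
  proof (unfold_locales)
    show "R j \<subseteq> {1..n} \<times> {1..n}" by (rule sub)
    show "\<And>x. x \<in> {1..n} \<Longrightarrow> (x, x) \<in> R j" using refl_onD[OF rf] by blast
    show "\<And>x y z. (x, y) \<in> R j \<Longrightarrow> (y, z) \<in> R j \<Longrightarrow> (x, z) \<in> R j" using transD[OF tr] by blast
    show "\<And>x y. x \<in> {1..n} \<Longrightarrow> y \<in> {1..n} \<Longrightarrow> x \<noteq> y \<Longrightarrow> (x, y) \<in> R j \<or> (y, x) \<in> R j"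
      using to unfolding total_on_def by blast
    show "\<And>x y. (x, y) \<in> R j \<Longrightarrow> (y, x) \<in> R j \<Longrightarrow> x = y" using antisymD[OF an] by blast
    show "\<And>x y z. x \<in> {1..n} \<Longrightarrow> y \<in> {1..n} \<Longrightarrow> z \<in> {1..n} \<Longrightarrow>
              (x > y \<and> y > z \<or> z > y \<and> y > x) \<Longrightarrow> (x,y) \<in> R j \<Longrightarrow> (y,x) \<notin> R j \<Longrightarrow> (y,z) \<in> R j"
    proof -
      fix x y z assume "x \<in> {1..n}" "y \<in> {1..n}" "z \<in> {1..n}" "x > y \<and> y > z \<or> z > y \<and> y > x"
        "(x,y) \<in> R j" "(y,x) \<notin> R j"
      then show "(y,z) \<in> R j" using nsp j unfolding naturally_single_peaked_def spref_def wpref_def by blast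
    qed
    show "1 \<le> n" using j by simp
  qed
qed

lemma coal_eq: assumes "partition_on N P" "B \<in> P" "j \<in> B" shows "coal P j = B"
  unfolding coal_def
proof (rule the_equality)
  show "B \<in> P \<and> j \<in> B" using assms by blast
  fix B' assume B': "B' \<in> P \<and> j \<in> B'"
  show "B' = B"
  proof (rule ccontr)
    assume "B' \<noteq> B"
    then have "B' \<inter> B = {}" using disjointD[OF partition_onD2[OF assms(1)]] B' assms(2) by blast
    then show False using B' assms(3) by blast
  qed
qed

lemma coal_ex: assumes "partition_on N P" "j \<in> N" shows "\<exists>B\<in>P. j \<in> B \<and> coal P j = B"
proof -
  have "j \<in> \<Union>P" using partition_onD1[OF assms(1)] assms(2) by blast
  then obtain B where "B \<in> P" "j \<in> B" by blast
  then show ?thesis using coal_eq[OF assms(1)] by blast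
qed

definition Phi :: "nat \<Rightarrow> (nat \<Rightarrow> (nat \<times> nat) set) \<Rightarrow> nat set set \<Rightarrow> int" where
  "Phi n R P = (\<Sum>j<n. spo.pot n (R j) (card (coal P j)))"

lemma coal_card: assumes "partition_on {0..<n} P" "j < n"
  shows "1 \<le> card (coal P j)" "card (coal P j) \<le> n"
proof -
  obtain B where B: "B \<in> P" "j \<in> B" "coal P j = B" using coal_ex[OF assms(1)] assms(2) by auto
  have sub: "B \<subseteq> {0..<n}" using partition_onD1[OF assms(1)] B(1) by blast
  then have fin: "finite B" using finite_subset by blast
  show "1 \<le> card (coal P j)" using B fin by (simp add: Suc_le_eq card_gt_0_iff) blast
  show "card (coal P j) \<le> n" using card_mono[OF _ sub] B by simp
qed

lemma Phi_bounds:
  assumes g: "strict_anon_game n R" and nsp: "naturally_single_peaked n R" and P: "partition_on {0..<n} P"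
  shows "Phi n R P \<le> int n * (2 * int n * (int n + 1))" "int n * (- (int n + 1) * int n - int n) \<le> Phi n R P"
proof -
  have "\<forall>j\<in>{..<n}. spo.pot n (R j) (card (coal P j)) \<le> 2 * int n * (int n + 1)"
  proof
    fix j assume "j \<in> {..<n}"
    then have j: "j < n" by simp
    interpret spo n "R j" using spo_inst[OF g nsp j] .
    show "pot (card (coal P j)) \<le> 2 * int n * (int n + 1)"
      using pot_bounds(1)[OF coal_card[OF P j]] unfolding K_def .
  qed
  then have "Phi n R P \<le> (\<Sum>j<n. 2 * int n * (int n + 1))" unfolding Phi_def by (intro sum_mono) blast
  then show "Phi n R P \<le> int n * (2 * int n * (int n + 1))" by simp
  have "\<forall>j\<in>{..<n}. - (int n + 1) * int n - int n \<le> spo.pot n (R j) (card (coal P j))"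
  proof
    fix j assume "j \<in> {..<n}"
    then have j: "j < n" by simp
    interpret spo n "R j" using spo_inst[OF g nsp j] .
    show "- (int n + 1) * int n - int n \<le> pot (card (coal P j))"
      using pot_bounds(2)[OF coal_card[OF P j]] unfolding K_def .
  qed
  then have "(\<Sum>j<n. - (int n + 1) * int n - int n) \<le> Phi n R P" unfolding Phi_def by (intro sum_mono) blast
  then show "int n * (- (int n + 1) * int n - int n) \<le> Phi n R P" by simp
qed


lemma sum_ind: "finite S \<Longrightarrow> X \<subseteq> S \<Longrightarrow> (\<Sum>j\<in>S. (if j \<in> X then k else 0)) = k * int (card X)"
proof -
  assume f: "finite S" and X: "X \<subseteq> S"
  have "(\<Sum>j\<in>S. (if j \<in> X then k else 0)) = (\<Sum>j\<in>S \<inter> X. k)" using sum.inter_restrict[OF f, of "\<lambda>_. k" X] by simp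
  also have "S \<inter> X = X" using X by blast
  finally show ?thesis by simp
qed

lemma step:
  assumes g: "strict_anon_game n R" and nsp: "naturally_single_peaked n R"
    and P: "partition_on {0..<n} P" and dev: "IS_deviation n R P P'"
  shows "partition_on {0..<n} P' \<and> Phi n R P + 1 \<le> Phi n R P'"
proof -
  obtain i C where i: "i < n" and CP: "C \<in> P \<union> {{}}" and iC: "i \<notin> C"
    and P': "P' = ((P - {coal P i, C}) \<union> {coal P i - {i}, insert i C}) - {{}}"
    and pref_i: "spref (R i) (card (insert i C)) (card (coal P i))"
    and pref_C: "\<forall>j\<in>C. wpref (R j) (card (insert i C)) (card C)"
    using dev unfolding IS_deviation_def by blast
  obtain A where A: "A \<in> P" "i \<in> A" "coal P i = A" using coal_ex[OF P] i by auto
  have UP: "\<Union>P = {0..<n}" using partition_onD1[OF P] by simp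
  have disj: "\<And>X Y. X \<in> P \<Longrightarrow> Y \<in> P \<Longrightarrow> X \<noteq> Y \<Longrightarrow> X \<inter> Y = {}"
    using disjointD[OF partition_onD2[OF P]] by blast
  have Asub: "A \<subseteq> {0..<n}" using A(1) UP by blast
  have Csub: "C \<subseteq> {0..<n}" using CP UP by blast
  have finA: "finite A" and finC: "finite C" using Asub Csub finite_subset by blast+
  have AC: "A \<inter> C = {}"
  proof (cases "C = {}")
    case False
    then have "C \<in> P" using CP by blast
    moreover have "A \<noteq> C" using A(2) iC by blast
    ultimately show ?thesis using disj A(1) by blast
  qed simp
  define A' where "A' = A - {i}"
  define C' where "C' = insert i C"
  have P'': "P' = ((P - {A, C}) \<union> {A', C'}) - {{}}" using P' A(3) unfolding A'_def C'_def by simp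
  have C'ne: "C' \<noteq> {}" unfolding C'_def by blast
  have memP': "\<And>X. X \<in> P' \<longleftrightarrow> (X \<in> P \<and> X \<noteq> A \<and> X \<noteq> C \<or> X = A' \<and> A' \<noteq> {} \<or> X = C')"
  proof -
    fix X
    have e: "{} \<notin> P" using partition_onD3[OF P] .
    show "X \<in> P' \<longleftrightarrow> (X \<in> P \<and> X \<noteq> A \<and> X \<noteq> C \<or> X = A' \<and> A' \<noteq> {} \<or> X = C')"
    proof
      assume "X \<in> P'"
      then have "X \<in> (P - {A, C}) \<union> {A', C'}" "X \<noteq> {}" unfolding P'' by blast+
      then show "X \<in> P \<and> X \<noteq> A \<and> X \<noteq> C \<or> X = A' \<and> A' \<noteq> {} \<or> X = C'" by blast
    next
      assume "X \<in> P \<and> X \<noteq> A \<and> X \<noteq> C \<or> X = A' \<and> A' \<noteq> {} \<or> X = C'"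
      then have "X \<in> (P - {A, C}) \<union> {A', C'}" "X \<noteq> {}" using e C'ne by blast+
      then show "X \<in> P'" unfolding P'' by blast
    qed
  qed
  have part': "partition_on {0..<n} P'"
    unfolding partition_on_def
  proof (intro conjI)
    show "\<Union>P' = {0..<n}"
    proof
      show "\<Union>P' \<subseteq> {0..<n}"
      proof
        fix x assume "x \<in> \<Union>P'"
        then obtain X where X: "X \<in> P'" "x \<in> X" by blast
        then consider "X \<in> P" | "X = A'" | "X = C'" using memP' by blast
        then show "x \<in> {0..<n}"
        proof cases
          case 1 then show ?thesis using X UP by blast
        next
          case 2 then show ?thesis using X Asub unfolding A'_def by blast
        next
          case 3 then show ?thesis using X Csub i unfolding C'_def by auto
        qed
      qed
      show "{0..<n} \<subseteq> \<Union>P'"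
      proof
        fix x assume "x \<in> {0..<n}"
        then obtain B where B: "B \<in> P" "x \<in> B" using UP by blast
        show "x \<in> \<Union>P'"
        proof (cases "B = A \<or> B = C")
          case True
          show ?thesis
          proof (cases "x \<in> C'")
            case True then show ?thesis using memP' by blast
          next
            case False
            then have "x \<in> A'" using True B unfolding A'_def C'_def by auto
            then show ?thesis using memP' by blast
          qed
        next
          case False
          then show ?thesis using memP' B by blast
        qed
      qed
    qed
    show "disjoint P'"
    proof (rule disjointI)
      fix X Y assume X: "X \<in> P'" and Y: "Y \<in> P'" and XY: "X \<noteq> Y"
      have cases: "\<And>Z. Z \<in> P' \<Longrightarrow> (Z \<in> P \<and> Z \<noteq> A \<and> Z \<noteq> C) \<or> Z = A' \<or> Z = C'" using memP' by blast
      have oA: "\<And>Z. Z \<in> P \<Longrightarrow> Z \<noteq> A \<Longrightarrow> Z \<inter> A = {}" using disj A(1) by blast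
      have oC: "\<And>Z. Z \<in> P \<Longrightarrow> Z \<noteq> C \<Longrightarrow> Z \<inter> C = {}"
      proof -
        fix Z assume "Z \<in> P" "Z \<noteq> C"
        then show "Z \<inter> C = {}" using disj CP by (cases "C = {}") auto
      qed
      have iZ: "\<And>Z. Z \<in> P \<Longrightarrow> Z \<noteq> A \<Longrightarrow> i \<notin> Z" using oA A(2) by blast
      have A'C': "A' \<inter> C' = {}" using AC unfolding A'_def C'_def by blast
      have sym: "\<And>U V. U \<inter> V = {} \<Longrightarrow> V \<inter> U = {}" by blast
      have ZA': "\<And>Z. Z \<in> P \<Longrightarrow> Z \<noteq> A \<Longrightarrow> Z \<inter> A' = {}" using oA unfolding A'_def by blast
      have ZC': "\<And>Z. Z \<in> P \<Longrightarrow> Z \<noteq> A \<Longrightarrow> Z \<noteq> C \<Longrightarrow> Z \<inter> C' = {}"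
        using oC iZ unfolding C'_def by blast
      from cases[OF X] show "X \<inter> Y = {}"
      proof (elim disjE)
        assume x: "X \<in> P \<and> X \<noteq> A \<and> X \<noteq> C"
        from cases[OF Y] show ?thesis
        proof (elim disjE)
          assume "Y \<in> P \<and> Y \<noteq> A \<and> Y \<noteq> C" then show ?thesis using x XY disj by blast
        next
          assume "Y = A'" then show ?thesis using x ZA' by blast
        next
          assume "Y = C'" then show ?thesis using x ZC' by blast
        qed
      next
        assume x: "X = A'"
        from cases[OF Y] show ?thesis
        proof (elim disjE)
          assume "Y \<in> P \<and> Y \<noteq> A \<and> Y \<noteq> C" then show ?thesis using x ZA' sym by blast
        next
          assume "Y = A'" then show ?thesis using x XY by blast
        next
          assume "Y = C'" then show ?thesis using x A'C' by blast
        qed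
      next
        assume x: "X = C'"
        from cases[OF Y] show ?thesis
        proof (elim disjE)
          assume "Y \<in> P \<and> Y \<noteq> A \<and> Y \<noteq> C" then show ?thesis using x ZC' sym by blast
        next
          assume "Y = A'" then show ?thesis using x A'C' sym by blast
        next
          assume "Y = C'" then show ?thesis using x XY by blast
        qed
      qed
    qed
    show "{} \<notin> P'" unfolding P'' by blast
  qed
  define a where "a = card A"
  define c where "c = card C"
  have cardC': "card C' = c + 1" unfolding C'_def c_def using finC iC by simp
  have cardA': "card A' = a - 1" unfolding A'_def a_def using finA A(2) by simp
  have a1: "1 \<le> a" unfolding a_def using finA A(2) by (simp add: Suc_le_eq card_gt_0_iff) blast
  have C'sub: "C' \<subseteq> {0..<n}" unfolding C'_def using Csub i by auto
  have cn: "c + 1 \<le> n" using card_mono[OF _ C'sub] cardC' by simp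
  have an: "a \<le> n" unfolding a_def using card_mono[OF _ Asub] by simp
  have C'P': "C' \<in> P'" using memP'[of C'] by blast
  have coalC': "\<And>j. j \<in> C' \<Longrightarrow> coal P' j = C'" using coal_eq[OF part' C'P'] by blast
  have coalA': "\<And>j. j \<in> A' \<Longrightarrow> coal P' j = A'"
  proof -
    fix j assume "j \<in> A'"
    then have "A' \<noteq> {}" by blast
    then have "A' \<in> P'" using memP'[of A'] by blast
    then show "coal P' j = A'" using coal_eq[OF part'] \<open>j \<in> A'\<close> by blast
  qed
  have coalCP: "\<And>j. j \<in> C \<Longrightarrow> coal P j = C"
  proof -
    fix j assume "j \<in> C"
    then have "C \<in> P" using CP by blast
    then show "coal P j = C" using coal_eq[OF P] \<open>j \<in> C\<close> by blast
  qed
  define D where "D j = spo.pot n (R j) (card (coal P' j)) - spo.pot n (R j) (card (coal P j))" for j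
  define KK where "KK = int n + 1"
  define E where "E = 1 + KK * int a - KK * int (c + 1)"
  define w where "w j = (if j \<in> C then KK else 0) + (if j \<in> A' then - KK else 0) + (if j = i then E else 0)" for j
  have Dw: "w j \<le> D j" if j: "j < n" for j
  proof -
    interpret spo n "R j" using spo_inst[OF g nsp j] .
    have KK: "K = KK" unfolding K_def KK_def by simp
    consider "j \<in> C" | "j \<in> A'" | "j = i" | "j \<notin> C" "j \<notin> A" by (auto simp: A'_def)
    then show ?thesis
    proof cases
      case 1
      have w: "w j = KK" unfolding w_def using 1 AC iC A(2) unfolding A'_def by auto
      have c1: "1 \<le> c" unfolding c_def using finC 1 by (simp add: Suc_le_eq card_gt_0_iff) blast
      have "(c + 1, c) \<in> R j" using pref_C 1 cardC' unfolding wpref_def C'_def c_def by simp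
      then have "pot (c+1) = pot c + K" using pot_join c1 cn by blast
      moreover have "coal P' j = C'" using coalC' 1 unfolding C'_def by blast
      moreover have "coal P j = C" using coalCP 1 by blast
      ultimately show ?thesis unfolding D_def w using cardC' KK c_def by simp
    next
      case 2
      have w: "w j = - KK" unfolding w_def using 2 AC unfolding A'_def by auto
      have jA: "j \<in> A" and ij: "i \<noteq> j" using 2 unfolding A'_def by blast+
      have "card {i, j} \<le> card A" using A(2) jA by (intro card_mono[OF finA]) blast
      moreover have "card {i, j} = 2" using ij by simp
      ultimately have a2: "2 \<le> a" unfolding a_def by linarith
      have pl: "pot (a - 1) \<ge> pot a - K" using pot_leave a2 an by blast
      have s1: "card (coal P' j) = a - 1" using coalA'[OF 2] cardA' by simp
      have s2: "card (coal P j) = a" using coal_eq[OF P A(1) jA] unfolding a_def by simp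
      have "D j = pot (a - 1) - pot a" unfolding D_def s1 s2 by simp
      then show ?thesis using w pl KK by linarith
    next
      case 3
      have w: "w j = E" unfolding w_def using 3 iC unfolding A'_def by auto
      have "(c + 1, a) \<in> R j" "(a, c + 1) \<notin> R j"
        using pref_i cardC' A(3) unfolding 3 spref_def C'_def a_def by simp_all
      then have pm: "pot (c+1) + K * int (c+1) \<ge> pot a + K * int a + 1" by (rule pot_move)
      have s1: "card (coal P' j) = c + 1" using coalC'[of j] cardC' unfolding 3 C'_def by simp
      have s2: "card (coal P j) = a" using A(3) unfolding 3 a_def by simp
      have "D j = pot (c + 1) - pot a" unfolding D_def s1 s2 by simp
      then show ?thesis using w pm[unfolded KK] unfolding E_def by linarith
    next
      case 4
      have w: "w j = 0" unfolding w_def using 4 A(2) unfolding A'_def by auto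
      obtain B where B: "B \<in> P" "j \<in> B" "coal P j = B" using coal_ex[OF P] j by auto
      have "B \<noteq> A" "B \<noteq> C" using B 4 by auto
      then have "B \<in> P'" using memP'[of B] B(1) by blast
      then have "coal P' j = B" using coal_eq[OF part'] B(2) by blast
      then show ?thesis unfolding D_def w using B(3) by simp
    qed
  qed
  have "Phi n R P' - Phi n R P = (\<Sum>j<n. D j)" unfolding Phi_def D_def by (simp add: sum_subtractf)
  moreover have "(\<Sum>j<n. w j) \<le> (\<Sum>j<n. D j)" using Dw by (intro sum_mono) simp
  moreover have "(\<Sum>j<n. w j) = 1"
  proof -
    have Csub': "C \<subseteq> {..<n}" using Csub by auto
    have A'sub: "A' \<subseteq> {..<n}" using Asub unfolding A'_def by auto
    have "(\<Sum>j<n. w j) = (\<Sum>j<n. (if j \<in> C then KK else 0)) + (\<Sum>j<n. (if j \<in> A' then - KK else 0))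
       + (\<Sum>j<n. (if j = i then E else 0))" unfolding w_def by (simp add: sum.distrib)
    also have "\<dots> = KK * int c + (- KK) * int (a - 1) + E"
      using sum_ind[OF _ Csub', of KK] sum_ind[OF _ A'sub, of "- KK"] i cardA' unfolding c_def by simp
    also have "\<dots> = 1" unfolding E_def using a1 by (simp add: algebra_simps of_nat_diff)
    finally show ?thesis .
  qed
  ultimately have "Phi n R P + 1 \<le> Phi n R P'" by linarith
  then show ?thesis using part' by blast
qed


lemma bound_O: "(\<lambda>n. real (n^2 * (3 * n + 4))) \<in> O(\<lambda>n. real n ^ 3)"
proof (rule bigoI[where c = 7])
  show "\<forall>\<^sub>F x in at_top. norm (real (x^2 * (3 * x + 4))) \<le> 7 * norm (real x ^ 3)"
    unfolding eventually_at_top_linorder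
  proof (intro exI allI impI)
    fix x :: nat assume x: "x \<ge> 1"
    have "x^2 * 4 \<le> x^2 * (4 * x)" using x by (intro mult_left_mono) auto
    then have "x^2 * (3 * x + 4) \<le> 7 * x^3" by (simp add: power2_eq_square power3_eq_cube algebra_simps)
    then have "real (x^2 * (3 * x + 4)) \<le> real (7 * x^3)" by (rule of_nat_mono)
    then show "norm (real (x^2 * (3 * x + 4))) \<le> 7 * norm (real x ^ 3)" by simp
  qed
qed

theorem theorem3p5:
  shows "\<exists>f :: nat \<Rightarrow> nat. (\<lambda>n. real (f n)) \<in> O(\<lambda>n. real n ^ 3) \<and>
    (\<forall>n R. strict_anon_game n R \<and> naturally_single_peaked n R \<longrightarrow>
       (\<forall>seq k. IS_sequence n R seq k \<longrightarrow> k \<le> f n))"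
proof (intro exI conjI allI impI)
  show "(\<lambda>n. real (n^2 * (3 * n + 4))) \<in> O(\<lambda>n. real n ^ 3)" by (rule bound_O)
  fix n R seq k
  assume gn: "strict_anon_game n R \<and> naturally_single_peaked n R" and sq: "IS_sequence n R seq k"
  have g: "strict_anon_game n R" and nsp: "naturally_single_peaked n R" using gn by auto
  have p0: "partition_on {0..<n} (seq 0)" and devs: "\<And>t. t < k \<Longrightarrow> IS_deviation n R (seq t) (seq (Suc t))"
    using sq unfolding IS_sequence_def by auto
  have inv: "t \<le> k \<Longrightarrow> partition_on {0..<n} (seq t) \<and> Phi n R (seq 0) + int t \<le> Phi n R (seq t)" for t
  proof (induction t)
    case 0 then show ?case using p0 by simp
  next
    case (Suc t)
    then have IH: "partition_on {0..<n} (seq t)" "Phi n R (seq 0) + int t \<le> Phi n R (seq t)" by auto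
    have "partition_on {0..<n} (seq (Suc t)) \<and> Phi n R (seq t) + 1 \<le> Phi n R (seq (Suc t))"
      using step[OF g nsp IH(1) devs] Suc.prems by simp
    then show ?case using IH(2) by auto
  qed
  have "Phi n R (seq 0) + int k \<le> Phi n R (seq k)" using inv by simp
  moreover have "Phi n R (seq k) \<le> int n * (2 * int n * (int n + 1))"
    using Phi_bounds(1)[OF g nsp] inv by simp
  moreover have "int n * (- (int n + 1) * int n - int n) \<le> Phi n R (seq 0)"
    using Phi_bounds(2)[OF g nsp p0] .
  ultimately have "int k \<le> int n * (2 * int n * (int n + 1)) - int n * (- (int n + 1) * int n - int n)"
    by linarith
  also have "\<dots> = int (n^2 * (3 * n + 4))" by (simp add: algebra_simps power2_eq_square)
  finally show "k \<le> n^2 * (3 * n + 4)" by linarith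
qed

end
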